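(* Let $\mu$ be strict with $\mu_1>1$ and set $k=\mu_1-1$. Then $$|\mathrm{Av}_n(\mu)\setminus D_n(\mu)|\ll\begin{cases}\sigma_0(n)& k=2,\\ \sigma_{k-2}(n)\log^{k-1}n& k\ge3.\end{cases}$$
   Context: A partition is a weakly decreasing sequence of nonnegative integers with finitely many nonzero parts, identified with its Ferrers board. $\alpha$ contains $\mu$ if one can delete some rows and some columns of the Ferrers board of $\alpha$ so that after top/left-justifying one obtains $\mu$; otherwise $\alpha$ avoids $\mu$. $\mathrm{Av}_n(\mu)$ is the set of partitions of weight $n$ avoiding $\mu$. Strict: positive parts distinct. For strict $\mu$, $D_n(\mu)$ is the set of partitions in $\mathrm{Av}_n(\mu)$ (for $n>0$) with exactly $\mu_1-1$ distinct positive part sizes. $\sigma_i(n)=\sum_{d\mid n}d^i$. $f\ll g$ means $f=O(g)$, with implied constants possibly depending on $\mu$. *)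

theory Defs
  imports Complex_Main "HOL-Library.Landau_Symbols"
begin

definition is_partition :: "nat list \<Rightarrow> bool" where
  "is_partition \<alpha> \<longleftrightarrow> sorted_wrt (\<ge>) \<alpha> \<and> (\<forall>x\<in>set \<alpha>. 0 < x)"

definition strict_partition :: "nat list \<Rightarrow> bool" where
  "strict_partition \<mu> \<longleftrightarrow> is_partition \<mu> \<and> distinct \<mu>"

text \<open>Ferrers board containment: keep a set R of rows and a set C of columns of the board of
  alpha (cell (i,j) present iff j < alpha!i); the kept row i then has
  card {j in C. j < alpha!i} cells; top/left-justifying (dropping empty rows) must give mu.\<close>
definition contains :: "nat list \<Rightarrow> nat list \<Rightarrow> bool" where
  "contains \<alpha> \<mu> \<longleftrightarrow> (\<exists>R C. R \<subseteq> {..<length \<alpha>} \<and> finite (C :: nat set) \<and>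
      filter (\<lambda>x. 0 < x) (map (\<lambda>i. card {j\<in>C. j < \<alpha> ! i}) (sorted_list_of_set R)) = \<mu>)"

definition Av :: "nat \<Rightarrow> nat list \<Rightarrow> nat list set" where
  "Av n \<mu> = {\<alpha>. is_partition \<alpha> \<and> sum_list \<alpha> = n \<and> \<not> contains \<alpha> \<mu>}"

definition D :: "nat \<Rightarrow> nat list \<Rightarrow> nat list set" where
  "D n \<mu> = {\<alpha>\<in>Av n \<mu>. 0 < n \<and> card (set \<alpha>) = hd \<mu> - 1}"

definition sigma :: "nat \<Rightarrow> nat \<Rightarrow> real" where
  "sigma i n = (\<Sum>d\<in>{d. d dvd n}. real d ^ i)"

end

theory Submission
  imports Defs "HOL-Number_Theory.Cong" "HOL-Library.Multiset"
begin

lemma cong_cancel_gcd: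
  fixes a b x1 x2 :: nat
  assumes "b > 0" "[a*x1 = a*x2] (mod b)"
  shows "[x1 = x2] (mod (b div gcd a b))"
proof -
  define g where "g = gcd a b"
  have g0: "g > 0" using assms g_def by simp
  obtain a' b' where ab: "a = g*a'" "b = g*b'" "coprime a' b'"
    using gcd_coprime_exists[of a b] g0 g_def by (metis mult.commute neq0_conv)
  have bd: "b div g = b'" using ab g0 by simp
  have "int b dvd int a * (int x1 - int x2)"
    using assms(2) by (simp add: cong_int_iff[symmetric] cong_iff_dvd_diff algebra_simps)
  hence "int g * int b' dvd int g * (int a' * (int x1 - int x2))" using ab by (simp add: ac_simps)
  hence "int b' dvd int a' * (int x1 - int x2)" using g0 by (subst (asm) dvd_mult_cancel_left) auto
  hence "int b' dvd (int x1 - int x2)"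
    using ab(3) by (metis coprime_commute coprime_dvd_mult_right_iff coprime_int_iff)
  hence "[int x1 = int x2] (mod int b')" by (simp add: cong_iff_dvd_diff)
  thus ?thesis using bd g_def by (simp add: cong_int_iff)
qed

lemma card_cong_le:
  fixes a b c N :: nat
  assumes "b > 0"
  shows "real (card {x. x \<le> N \<and> [a*x = c] (mod b)}) \<le> real N * gcd a b / b + 1"
proof -
  define S where "S = {x. x \<le> N \<and> [a*x = c] (mod b)}"
  define b' where "b' = b div gcd a b"
  have gpos: "gcd a b > 0" using assms by simp
  have bb: "b = gcd a b * b'" using b'_def by simp
  hence b'0: "b' > 0" using assms by (metis gr0I mult_0_right)
  have inj: "inj_on (\<lambda>x. x div b') S"
  proof (rule inj_onI)
    fix x y assume xy: "x \<in> S" "y \<in> S" "x div b' = y div b'"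
    have "[a*x = a*y] (mod b)" using xy unfolding S_def by (metis (mono_tags, lifting) cong_sym cong_trans mem_Collect_eq)
    hence "[x = y] (mod b')" using cong_cancel_gcd[OF assms] b'_def by blast
    hence "x mod b' = y mod b'" by (simp add: cong_def)
    thus "x = y" using xy(3) by (metis div_mult_mod_eq)
  qed
  have "(\<lambda>x. x div b') ` S \<subseteq> {..N div b'}" unfolding S_def by (auto intro: div_le_mono)
  hence "card S \<le> card {..N div b'}" using inj by (metis card_image card_mono finite_atMost)
  hence "card S \<le> N div b' + 1" by simp
  hence "real (card S) \<le> real (N div b') + 1" by linarith
  also have "real (N div b') \<le> real N / real b'"
  proof -
    have "real (N div b') * real b' \<le> real N" by (metis div_times_less_eq_dividend of_nat_le_iff of_nat_mult)
    thus ?thesis using b'0 by (simp add: field_simps)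
  qed
  also have "real N / real b' = real N * gcd a b / b"
  proof -
    have "real b = real (gcd a b) * real b'" using bb by (metis of_nat_mult)
    thus ?thesis using gpos b'0 by (simp add: field_simps)
  qed
  finally show ?thesis unfolding S_def by simp
qed

definition H :: "nat \<Rightarrow> real" where "H n = (\<Sum>k\<in>{1..n}. 1 / real k)"

lemma H_Suc: "H (Suc n) = H n + 1 / real (Suc n)"
  unfolding H_def by simp

lemma H_nonneg: "H n \<ge> 0" unfolding H_def by (intro sum_nonneg) auto

lemma H_mono: "m \<le> n \<Longrightarrow> H m \<le> H n"
  unfolding H_def by (intro sum_mono2) auto

lemma H_le_ln: "H n \<le> 1 + ln (real n)"
proof (induction n)
  case 0 then show ?case by (simp add: H_def)
next
  case (Suc n)
  show ?case
  proof (cases "n = 0")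
    case True then show ?thesis by (simp add: H_def)
  next
    case False
    hence np: "real n > 0" by simp
    have "ln (real n / real (Suc n)) \<le> real n / real (Suc n) - 1"
      using np by (intro ln_le_minus_one) simp
    hence "ln (real n) - ln (real (Suc n)) \<le> - 1 / real (Suc n)"
      using np by (simp add: ln_div field_simps)
    thus ?thesis using Suc.IH by (simp add: H_Suc)
  qed
qed

lemma sum_dvd_reindex:
  fixes f :: "nat \<Rightarrow> real"
  assumes "e > 0"
  shows "(\<Sum>a\<in>{1..N}. if e dvd a then f a else 0) = (\<Sum>t\<in>{1..N div e}. f (e*t))"
proof -
  have "(\<Sum>a\<in>{1..N}. if e dvd a then f a else 0) = sum f {a\<in>{1..N}. e dvd a}"
    by (simp add: sum.inter_filter[symmetric])
  also have "{a\<in>{1..N}. e dvd a} = (\<lambda>t. e*t) ` {1..N div e}"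
  proof
    show "{a \<in> {1..N}. e dvd a} \<subseteq> (*) e ` {1..N div e}"
    proof
      fix a assume "a \<in> {a \<in> {1..N}. e dvd a}"
      then obtain t where t: "a = e*t" "1 \<le> e*t" "e*t \<le> N" by auto
      have "t \<ge> 1" using t by (cases t) auto
      moreover have "t \<le> N div e" using t assms by (metis div_le_mono nonzero_mult_div_cancel_left not_gr0)
      ultimately show "a \<in> (*) e ` {1..N div e}" using t by auto
    qed
    show "(*) e ` {1..N div e} \<subseteq> {a \<in> {1..N}. e dvd a}"
    proof
      fix a assume "a \<in> (*) e ` {1..N div e}"
      then obtain t where t: "a = e*t" "1 \<le> t" "t \<le> N div e" using imageE by (metis atLeastAtMost_iff)
      have "e * t \<le> e * (N div e)" using t by simp
      also have "\<dots> \<le> N" by simp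
      finally show "a \<in> {a \<in> {1..N}. e dvd a}" using t assms by auto
    qed
  qed
  also have "sum f ((\<lambda>t. e*t) ` {1..N div e}) = (\<Sum>t\<in>{1..N div e}. f (e*t))"
    using assms by (subst sum.reindex) (auto simp: inj_on_def)
  finally show ?thesis .
qed

lemma S1:
  assumes "e > 0"
  shows "(\<Sum>a\<in>{1..N}. if e dvd a then 1 / real a else 0) \<le> H N / real e"
proof -
  have "(\<Sum>a\<in>{1..N}. if e dvd a then 1 / real a else 0) = (\<Sum>t\<in>{1..N div e}. 1 / real (e*t))"
    using sum_dvd_reindex[OF assms, of "\<lambda>a. 1 / real a"] by simp
  also have "\<dots> = H (N div e) / real e" unfolding H_def by (simp add: sum_divide_distrib mult.commute)
  also have "\<dots> \<le> H N / real e" using assms by (intro divide_right_mono H_mono) auto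
  finally show ?thesis .
qed

lemma inv_sq_sum: "(\<Sum>t\<in>{1..N}. 1 / real t ^ 2) \<le> 2 - 1 / real (max 1 N)"
proof (induction N)
  case 0 then show ?case by simp
next
  case (Suc N)
  show ?case
  proof (cases "N = 0")
    case True then show ?thesis by simp
  next
    case False
    hence np: "real N \<ge> 1" by simp
    have key: "1 / real (Suc N) ^ 2 \<le> 1 / real N - 1 / real (Suc N)"
    proof -
      have "1 / real (Suc N) ^ 2 \<le> 1 / (real N * real (Suc N))"
        using np by (intro divide_left_mono) (auto simp: power2_eq_square)
      also have "\<dots> = 1 / real N - 1 / real (Suc N)" using np by (simp add: field_simps)
      finally show ?thesis .
    qed
    have "(\<Sum>t\<in>{1..Suc N}. 1 / real t ^ 2) = (\<Sum>t\<in>{1..N}. 1 / real t ^ 2) + 1 / real (Suc N) ^ 2"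
      by simp
    also have "\<dots> \<le> 2 - 1 / real N + (1 / real N - 1 / real (Suc N))"
      using Suc.IH False key by (simp add: max_def)
    finally show ?thesis by simp
  qed
qed

lemma inv_sq_sum2: "(\<Sum>t\<in>{1..N}. 1 / real t ^ 2) \<le> 2"
  using inv_sq_sum[of N] by (smt (verit) divide_nonneg_nonneg of_nat_0_le_iff)

lemma S2:
  assumes "e > 0"
  shows "(\<Sum>g\<in>{1..N}. if e dvd g then 1 / real g ^ 2 else 0) \<le> 2 / real e ^ 2"
proof -
  have "(\<Sum>g\<in>{1..N}. if e dvd g then 1 / real g ^ 2 else 0) = (\<Sum>t\<in>{1..N div e}. 1 / real (e*t) ^ 2)"
    using sum_dvd_reindex[OF assms, of "\<lambda>a. 1 / real a ^ 2"] by simp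
  also have "\<dots> = (\<Sum>t\<in>{1..N div e}. 1 / real t ^ 2) / real e ^ 2"
    by (simp add: sum_divide_distrib power_mult_distrib mult.commute)
  also have "\<dots> \<le> 2 / real e ^ 2" using inv_sq_sum2 by (intro divide_right_mono) auto
  finally show ?thesis .
qed

definition sols :: "nat \<Rightarrow> nat \<Rightarrow> (nat \<times> nat) list set" where
  "sols j n = {ps. length ps = j \<and> (\<forall>p\<in>set ps. 0 < fst p \<and> 0 < snd p) \<and> (\<Sum>p\<leftarrow>ps. fst p * snd p) = n}"

definition Pn :: "nat \<Rightarrow> (nat \<times> nat) set" where
  "Pn n = {(a,x). 0 < a \<and> 0 < x \<and> a*x \<le> n}"

lemma sols_finite: "finite (sols j n)"
proof -
  have "sols j n \<subseteq> {ps. set ps \<subseteq> {0..n}\<times>{0..n} \<and> length ps = j}"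
  proof
    fix ps assume ps: "ps \<in> sols j n"
    have "\<forall>p\<in>set ps. p \<in> {0..n}\<times>{0..n}"
    proof
      fix p assume p: "p \<in> set ps"
      have "fst p * snd p \<in> set (map (\<lambda>p. fst p * snd p) ps)" using p by auto
      hence "fst p * snd p \<le> sum_list (map (\<lambda>p. fst p * snd p) ps)" by (intro member_le_sum_list) auto
      hence le: "fst p * snd p \<le> n" using ps unfolding sols_def by simp
      have "fst p \<le> fst p * snd p" "snd p \<le> fst p * snd p" using ps p unfolding sols_def by auto
      hence "fst p \<le> n" "snd p \<le> n" using le by linarith+
      thus "p \<in> {0..n}\<times>{0..n}" by (cases p) auto
    qed
    thus "ps \<in> {ps. set ps \<subseteq> {0..n}\<times>{0..n} \<and> length ps = j}" using ps unfolding sols_def by auto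
  qed
  thus ?thesis using finite_lists_length_eq[of "{0..n}\<times>{0..n}" j] finite_subset by blast
qed

lemma Pn_finite: "finite (Pn n)"
proof (rule finite_subset[of _ "{0..n}\<times>{0..n}"])
  show "Pn n \<subseteq> {0..n}\<times>{0..n}"
  proof
    fix p assume "p \<in> Pn n"
    then obtain a x where p: "p = (a,x)" "0 < a" "0 < x" "a*x \<le> n" unfolding Pn_def by auto
    have "a \<le> a*x" "x \<le> a*x" using p by auto
    hence "a \<le> n" "x \<le> n" using p(4) by linarith+
    thus "p \<in> {0..n}\<times>{0..n}" using p by auto
  qed
qed simp

lemma card_Pn: "real (card (Pn n)) \<le> real n * H n"
proof -
  have eq: "Pn n = (SIGMA a:{1..n}. {1..n div a})"
  proof (intro set_eqI iffI)
    fix p assume "p \<in> Pn n"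
    then obtain a b where p: "p = (a,b)" "0 < a" "0 < b" "a*b \<le> n" unfolding Pn_def by auto
    hence "a \<le> a*b" by simp
    hence "a \<le> n" using p by linarith
    moreover have "b \<le> n div a" using p by (metis div_le_mono nonzero_mult_div_cancel_left not_gr0)
    ultimately show "p \<in> (SIGMA a:{1..n}. {1..n div a})" using p by auto
  next
    fix p assume "p \<in> (SIGMA a:{1..n}. {1..n div a})"
    then obtain a b where p: "p = (a,b)" "1 \<le> a" "1 \<le> b" "b \<le> n div a" by auto
    hence "a * b \<le> a * (n div a)" by simp
    also have "\<dots> \<le> n" by simp
    finally show "p \<in> Pn n" using p unfolding Pn_def by auto
  qed
  have "card (Pn n) = (\<Sum>a\<in>{1..n}. n div a)" unfolding eq by (subst card_SigmaI) auto
  hence "real (card (Pn n)) = (\<Sum>a\<in>{1..n}. real (n div a))" by simp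
  also have "\<dots> \<le> (\<Sum>a\<in>{1..n}. real n * (1 / real a))"
  proof (rule sum_mono)
    fix a assume a: "a \<in> {1..n}"
    have "real (n div a) * real a \<le> real n" by (metis div_times_less_eq_dividend of_nat_le_iff of_nat_mult)
    thus "real (n div a) \<le> real n * (1 / real a)" using a by (simp add: field_simps)
  qed
  also have "\<dots> = real n * H n" unfolding H_def by (simp add: sum_distrib_left)
  finally show ?thesis .
qed

lemma sols_Suc_le:
  "real (card (sols (Suc j) n)) \<le> (\<Sum>p\<in>Pn n. real (card (sols j (n - fst p * snd p))))"
proof -
  have sub: "sols (Suc j) n \<subseteq> (\<Union>p\<in>Pn n. (\<lambda>ps. p # ps) ` sols j (n - fst p * snd p))"
  proof
    fix ps assume ps: "ps \<in> sols (Suc j) n"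
    then obtain p qs where pq: "ps = p # qs" unfolding sols_def by (cases ps) auto
    have h: "length qs = j" "0 < fst p" "0 < snd p" "\<forall>q\<in>set qs. 0 < fst q \<and> 0 < snd q"
      "fst p * snd p + (\<Sum>q\<leftarrow>qs. fst q * snd q) = n"
      using ps pq unfolding sols_def by auto
    have "p \<in> Pn n" using h unfolding Pn_def by (cases p) auto
    moreover have "qs \<in> sols j (n - fst p * snd p)" using h unfolding sols_def by auto
    ultimately show "ps \<in> (\<Union>p\<in>Pn n. (\<lambda>ps. p # ps) ` sols j (n - fst p * snd p))"
      using pq by blast
  qed
  have "card (sols (Suc j) n) \<le> card (\<Union>p\<in>Pn n. (\<lambda>ps. p # ps) ` sols j (n - fst p * snd p))"
    by (rule card_mono[OF _ sub]) (auto intro: Pn_finite sols_finite)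
  also have "\<dots> \<le> (\<Sum>p\<in>Pn n. card ((\<lambda>ps. p # ps) ` sols j (n - fst p * snd p)))"
    by (rule card_UN_le[OF Pn_finite])
  also have "\<dots> \<le> (\<Sum>p\<in>Pn n. card (sols j (n - fst p * snd p)))"
    by (intro sum_mono card_image_le sols_finite)
  finally show ?thesis by (metis of_nat_le_iff of_nat_sum)
qed

lemma sols_one: 
  assumes "n > 0" shows "card (sols 1 n) \<le> card {d. d dvd n}"
proof -
  have "sols 1 n \<subseteq> (\<lambda>d. [(d, n div d)]) ` {d. d dvd n}"
  proof
    fix ps assume ps: "ps \<in> sols 1 n"
    then obtain p where p: "ps = [p]" unfolding sols_def by (auto simp: length_Suc_conv)
    hence "fst p * snd p = n" "0 < fst p" using ps unfolding sols_def by auto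
    hence "fst p dvd n" "snd p = n div fst p" by auto
    thus "ps \<in> (\<lambda>d. [(d, n div d)]) ` {d. d dvd n}" using p by (cases p) auto
  qed
  hence "card (sols 1 n) \<le> card ((\<lambda>d. [(d, n div d)]) ` {d. d dvd n})"
    using assms by (intro card_mono) auto
  also have "\<dots> \<le> card {d. d dvd n}" by (rule card_image_le) (use assms in auto)
  finally show ?thesis .
qed

definition Lset :: "nat \<Rightarrow> nat \<Rightarrow> nat \<Rightarrow> (nat \<times> nat) set" where
  "Lset a b n = {(x,y). 0<x \<and> 0<y \<and> a*x+b*y = n}"

lemma Lset_finite: assumes "a > 0" "b > 0" shows "finite (Lset a b n)"
proof (rule finite_subset[of _ "{0..n}\<times>{0..n}"])
  show "Lset a b n \<subseteq> {0..n}\<times>{0..n}"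
  proof
    fix p assume "p \<in> Lset a b n"
    then obtain x y where p: "p = (x,y)" "0<x" "0<y" "a*x+b*y = n" unfolding Lset_def by auto
    have "x \<le> a*x" "y \<le> b*y" using assms by auto
    hence "x \<le> n" "y \<le> n" using p by linarith+
    thus "p \<in> {0..n}\<times>{0..n}" using p by auto
  qed
qed simp

lemma Lset_card:
  assumes "a > 0" "b > 0"
  shows "real (card (Lset a b n)) \<le> (if gcd a b dvd n then real n * gcd a b / (a*b) + 1 else 0)"
proof (cases "gcd a b dvd n")
  case False
  have "Lset a b n = {}"
  proof (rule ccontr)
    assume "Lset a b n \<noteq> {}"
    then obtain x y where "a*x+b*y = n" unfolding Lset_def by auto
    hence "gcd a b dvd n" by (metis dvd_add gcd_dvd1 gcd_dvd2 dvd_mult2)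
    thus False using False by simp
  qed
  thus ?thesis by simp
next
  case True
  have inj: "inj_on fst (Lset a b n)"
  proof (rule inj_onI)
    fix p q assume pq: "p \<in> Lset a b n" "q \<in> Lset a b n" "fst p = fst q"
    obtain x y where p: "p = (x,y)" "a*x+b*y = n" using pq unfolding Lset_def by auto
    obtain x' y' where q: "q = (x',y')" "a*x'+b*y' = n" using pq unfolding Lset_def by auto
    have "x = x'" using p q pq(3) by simp
    hence "b*y = b*y'" using p(2) q(2) by (metis add_left_cancel)
    hence "y = y'" using assms by simp
    thus "p = q" using p q \<open>x = x'\<close> by simp
  qed
  have sub: "fst ` Lset a b n \<subseteq> {x. x \<le> n div a \<and> [a*x = n] (mod b)}"
  proof
    fix x assume "x \<in> fst ` Lset a b n"
    then have "\<exists>y. a*x+b*y = n" unfolding Lset_def by force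
    then obtain y where xy: "a*x+b*y = n" by blast
    have "x \<le> n div a" using xy assms by (metis le_add1 div_le_mono nonzero_mult_div_cancel_left not_gr0)
    moreover have "[a*x = n] (mod b)" using xy by (metis cong_def mod_mult_self2)
    ultimately show "x \<in> {x. x \<le> n div a \<and> [a*x = n] (mod b)}" by simp
  qed
  have fin: "finite {x. x \<le> n div a \<and> [a*x = n] (mod b)}" by simp
  have "card (Lset a b n) = card (fst ` Lset a b n)" using inj by (simp add: card_image)
  also have "\<dots> \<le> card {x. x \<le> n div a \<and> [a*x = n] (mod b)}" by (rule card_mono[OF fin sub])
  finally have "real (card (Lset a b n)) \<le> real (n div a) * gcd a b / b + 1"
    using card_cong_le[OF assms(2), of "n div a" a n] by linarith
  also have "real (n div a) * gcd a b / b \<le> (real n / a) * gcd a b / b"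
  proof -
    have "real (n div a) * real a \<le> real n" by (metis div_times_less_eq_dividend of_nat_le_iff of_nat_mult)
    hence "real (n div a) \<le> real n / a" using assms by (simp add: field_simps)
    thus ?thesis by (intro divide_right_mono mult_right_mono) auto
  qed
  also have "(real n / a) * gcd a b / b = real n * gcd a b / (a*b)" by simp
  finally show ?thesis using True by simp
qed

definition sw :: "nat \<times> nat \<Rightarrow> nat \<times> nat" where "sw p = (snd p, fst p)"

definition Tset :: "nat \<Rightarrow> (nat \<times> nat) list set" where
  "Tset n = {ps \<in> sols 2 n. \<forall>p\<in>set ps. fst p \<le> snd p}"

lemma sols2_le_T: "card (sols 2 n) \<le> 4 * card (Tset n)"
proof -
  define F where "F = {id, sw}"
  have sub: "sols 2 n \<subseteq> (\<Union>f\<in>F. \<Union>g\<in>F. (\<lambda>ps. [f (ps!0), g (ps!1)]) ` Tset n)"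
  proof
    fix ps assume ps: "ps \<in> sols 2 n"
    then obtain p q where pq: "ps = [p,q]" unfolding sols_def by (auto simp: numeral_2_eq_2 length_Suc_conv)
    define f where "f = (if fst p \<le> snd p then id else sw)"
    define g where "g = (if fst q \<le> snd q then id else sw)"
    have fF: "f \<in> F" "g \<in> F" unfolding F_def f_def g_def by auto
    have ff: "f (f p) = p" "g (g q) = q" unfolding f_def g_def sw_def by auto
    have prod: "fst (f p) * snd (f p) = fst p * snd p" "fst (g q) * snd (g q) = fst q * snd q"
      unfolding f_def g_def sw_def by auto
    have pos: "0 < fst (f p) \<and> 0 < snd (f p)" "0 < fst (g q) \<and> 0 < snd (g q)"
      using ps pq unfolding f_def g_def sw_def sols_def by auto
    have ord: "fst (f p) \<le> snd (f p)" "fst (g q) \<le> snd (g q)" unfolding f_def g_def sw_def by auto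
    have "[f p, g q] \<in> Tset n" using ps pq prod pos ord unfolding Tset_def sols_def by auto
    moreover have "ps = [f ([f p, g q]!0), g ([f p, g q]!1)]" using pq ff by simp
    ultimately show "ps \<in> (\<Union>f\<in>F. \<Union>g\<in>F. (\<lambda>ps. [f (ps!0), g (ps!1)]) ` Tset n)" using fF by blast
  qed
  have finT: "finite (Tset n)" unfolding Tset_def using sols_finite by simp
  have "card (sols 2 n) \<le> card (\<Union>f\<in>F. \<Union>g\<in>F. (\<lambda>ps. [f (ps!0), g (ps!1)]) ` Tset n)"
    by (rule card_mono[OF _ sub]) (use finT in \<open>auto simp: F_def\<close>)
  also have "\<dots> \<le> (\<Sum>f\<in>F. card (\<Union>g\<in>F. (\<lambda>ps. [f (ps!0), g (ps!1)]) ` Tset n))"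
    by (rule card_UN_le) (simp add: F_def)
  also have "\<dots> \<le> (\<Sum>f\<in>F. \<Sum>g\<in>F. card ((\<lambda>ps. [f (ps!0), g (ps!1)]) ` Tset n))"
    by (intro sum_mono card_UN_le) (simp add: F_def)
  also have "\<dots> \<le> (\<Sum>f\<in>F. \<Sum>g\<in>F. card (Tset n))"
    by (intro sum_mono card_image_le finT)
  also have "\<dots> = card F * card F * card (Tset n)" by simp
  also have "\<dots> \<le> 2 * 2 * card (Tset n)"
  proof -
    have "card F \<le> 2" unfolding F_def by (simp add: card_insert_le_m1)
    thus ?thesis by (intro mult_le_mono) auto
  qed
  finally show ?thesis by simp
qed

definition Aset :: "nat \<Rightarrow> nat set" where "Aset n = {a. 0<a \<and> a*a \<le> n}"

lemma Aset_sub: "Aset n \<subseteq> {1..n}"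
proof
  fix a assume "a \<in> Aset n"
  hence a: "0 < a" "a*a \<le> n" unfolding Aset_def by auto
  hence "a \<le> a*a" by simp
  hence "a \<le> n" using a by linarith
  thus "a \<in> {1..n}" using a by auto
qed

lemma Aset_finite: "finite (Aset n)" using Aset_sub finite_subset by blast

lemma Aset_card: "card (Aset n) * card (Aset n) \<le> n"
proof (cases "Aset n = {}")
  case True then show ?thesis by simp
next
  case False
  define M where "M = Max (Aset n)"
  have M: "M \<in> Aset n" unfolding M_def using False Aset_finite by simp
  have "Aset n \<subseteq> {1..M}" unfolding M_def using Aset_finite by (auto simp: Aset_def)
  hence "card (Aset n) \<le> M" by (metis card_atLeastAtMost card_mono diff_Suc_1 finite_atLeastAtMost)
  hence "card (Aset n) * card (Aset n) \<le> M * M" by (intro mult_le_mono)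
  also have "\<dots> \<le> n" using M unfolding Aset_def by simp
  finally show ?thesis .
qed

lemma T_sub: "Tset n \<subseteq> (\<Union>a\<in>Aset n. \<Union>b\<in>Aset n. (\<lambda>(x,y). [(a,x),(b,y)]) ` Lset a b n)"
proof
  fix ps assume ps: "ps \<in> Tset n"
  then obtain p q where pq: "ps = [p,q]" unfolding Tset_def sols_def by (auto simp: numeral_2_eq_2 length_Suc_conv)
  obtain a x b y where ab: "p = (a,x)" "q = (b,y)" by (cases p, cases q) auto
  have h: "0<a" "0<x" "0<b" "0<y" "a \<le> x" "b \<le> y" "a*x+b*y = n"
    using ps pq ab unfolding Tset_def sols_def by auto
  have "a*a \<le> a*x" "b*b \<le> b*y" using h by auto
  hence "a*a \<le> n" "b*b \<le> n" using h by linarith+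
  hence "a \<in> Aset n" "b \<in> Aset n" using h unfolding Aset_def by auto
  moreover have "(x,y) \<in> Lset a b n" using h unfolding Lset_def by auto
  ultimately show "ps \<in> (\<Union>a\<in>Aset n. \<Union>b\<in>Aset n. (\<lambda>(x,y). [(a,x),(b,y)]) ` Lset a b n)"
    using pq ab by force
qed

definition G :: "nat \<Rightarrow> nat \<Rightarrow> nat \<Rightarrow> real" where
  "G n a b = (if gcd a b dvd n then real (gcd a b) / (real a * real b) else 0)"

definition D1 :: "nat \<Rightarrow> real" where
  "D1 n = (\<Sum>g\<in>{1..n}. if g dvd n then 1 / real g else 0)"

lemma G_nonneg: "G n a b \<ge> 0" unfolding G_def by auto

lemma sum_G: "(\<Sum>a\<in>{1..n}. \<Sum>b\<in>{1..n}. G n a b) \<le> H n ^ 2 * D1 n"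
proof -
  define K where "K g a b = (if g dvd n \<and> g dvd a \<and> g dvd b then real g / (real a * real b) else 0)" for g a b
  have pw: "G n a b \<le> (\<Sum>g\<in>{1..n}. K g a b)" if ab: "a \<in> {1..n}" "b \<in> {1..n}" for a b
  proof (cases "gcd a b dvd n")
    case True
    have "gcd a b \<in> {1..n}" using ab by (auto simp: Suc_le_eq intro: le_trans[OF gcd_le1_nat])
    hence "K (gcd a b) a b \<le> (\<Sum>g\<in>{1..n}. K g a b)"
      by (intro member_le_sum) (auto simp: K_def)
    moreover have "K (gcd a b) a b = G n a b" using True unfolding K_def G_def by auto
    ultimately show ?thesis by simp
  next
    case False
    thus ?thesis unfolding G_def K_def by (auto intro!: sum_nonneg)
  qed
  have "(\<Sum>a\<in>{1..n}. \<Sum>b\<in>{1..n}. G n a b) \<le> (\<Sum>a\<in>{1..n}. \<Sum>b\<in>{1..n}. \<Sum>g\<in>{1..n}. K g a b)"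
    by (intro sum_mono pw)
  also have "\<dots> = (\<Sum>a\<in>{1..n}. \<Sum>g\<in>{1..n}. \<Sum>b\<in>{1..n}. K g a b)"
    by (intro sum.cong refl sum.swap)
  also have "\<dots> = (\<Sum>g\<in>{1..n}. \<Sum>a\<in>{1..n}. \<Sum>b\<in>{1..n}. K g a b)"
    by (rule sum.swap)
  also have "\<dots> = (\<Sum>g\<in>{1..n}. (if g dvd n then real g else 0) *
      ((\<Sum>a\<in>{1..n}. if g dvd a then 1 / real a else 0) * (\<Sum>b\<in>{1..n}. if g dvd b then 1 / real b else 0)))"
  proof (intro sum.cong refl)
    fix g
    define c where "c = (if g dvd n then real g else 0)"
    define f where "f a = (if g dvd a then 1 / real a else 0)" for a
    have "(\<Sum>a\<in>{1..n}. \<Sum>b\<in>{1..n}. K g a b) = (\<Sum>a\<in>{1..n}. \<Sum>b\<in>{1..n}. c * (f a * f b))"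
      by (intro sum.cong refl) (auto simp: K_def c_def f_def)
    also have "\<dots> = c * ((\<Sum>a\<in>{1..n}. f a) * (\<Sum>b\<in>{1..n}. f b))"
      by (subst sum_product) (simp add: sum_distrib_left)
    finally show "(\<Sum>a\<in>{1..n}. \<Sum>b\<in>{1..n}. K g a b) = (if g dvd n then real g else 0) *
      ((\<Sum>a\<in>{1..n}. if g dvd a then 1 / real a else 0) * (\<Sum>b\<in>{1..n}. if g dvd b then 1 / real b else 0))"
      unfolding c_def f_def .
  qed
  also have "\<dots> \<le> (\<Sum>g\<in>{1..n}. (if g dvd n then real g else 0) * ((H n / real g) * (H n / real g)))"
  proof (intro sum_mono mult_left_mono mult_mono)
    fix g assume g: "g \<in> {1..n}"
    show "(\<Sum>a\<in>{1..n}. if g dvd a then 1 / real a else 0) \<le> H n / real g"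
      using S1[of g n] g by simp
    show "(\<Sum>a\<in>{1..n}. if g dvd a then 1 / real a else 0) \<le> H n / real g"
      using S1[of g n] g by simp
    show "0 \<le> H n / real g" using H_nonneg by simp
    show "0 \<le> (\<Sum>a\<in>{1..n}. if g dvd a then 1 / real a else 0)" by (intro sum_nonneg) auto
    show "0 \<le> (if g dvd n then real g else 0)" by simp
  qed
  also have "\<dots> = (\<Sum>g\<in>{1..n}. H n ^ 2 * (if g dvd n then 1 / real g else 0))"
    by (intro sum.cong refl) (auto simp: power2_eq_square)
  also have "\<dots> = H n ^ 2 * D1 n" unfolding D1_def by (simp add: sum_distrib_left)
  finally show ?thesis .
qed

lemma W2:
  "real (card (sols 2 n)) \<le> 4 * (real n * H n ^ 2 * D1 n + real n)"
proof -
  have finL: "\<forall>a\<in>Aset n. \<forall>b\<in>Aset n. finite (Lset a b n)"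
    using Lset_finite unfolding Aset_def by auto
  have "card (Tset n) \<le> card (\<Union>a\<in>Aset n. \<Union>b\<in>Aset n. (\<lambda>(x,y). [(a,x),(b,y)]) ` Lset a b n)"
    by (rule card_mono[OF _ T_sub]) (use finL Aset_finite in auto)
  also have "\<dots> \<le> (\<Sum>a\<in>Aset n. card (\<Union>b\<in>Aset n. (\<lambda>(x,y). [(a,x),(b,y)]) ` Lset a b n))"
    by (rule card_UN_le[OF Aset_finite])
  also have "\<dots> \<le> (\<Sum>a\<in>Aset n. \<Sum>b\<in>Aset n. card ((\<lambda>(x,y). [(a,x),(b,y)]) ` Lset a b n))"
    by (intro sum_mono card_UN_le Aset_finite)
  also have "\<dots> \<le> (\<Sum>a\<in>Aset n. \<Sum>b\<in>Aset n. card (Lset a b n))"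
    by (intro sum_mono card_image_le) (use finL in auto)
  finally have "real (card (Tset n)) \<le> (\<Sum>a\<in>Aset n. \<Sum>b\<in>Aset n. real (card (Lset a b n)))"
    by (metis (no_types, lifting) of_nat_le_iff of_nat_sum sum.cong)
  also have "\<dots> \<le> (\<Sum>a\<in>Aset n. \<Sum>b\<in>Aset n. real n * G n a b + 1)"
  proof (intro sum_mono)
    fix a b assume "a \<in> Aset n" "b \<in> Aset n"
    hence ab: "a > 0" "b > 0" unfolding Aset_def by auto
    show "real (card (Lset a b n)) \<le> real n * G n a b + 1"
      using Lset_card[OF ab, of n] unfolding G_def by (auto split: if_splits)
  qed
  also have "\<dots> = real n * (\<Sum>a\<in>Aset n. \<Sum>b\<in>Aset n. G n a b) + real (card (Aset n) * card (Aset n))"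
    by (simp add: sum.distrib sum_distrib_left)
  also have "\<dots> \<le> real n * (\<Sum>a\<in>{1..n}. \<Sum>b\<in>{1..n}. G n a b) + real n"
  proof (intro add_mono mult_left_mono)
    have "(\<Sum>a\<in>Aset n. \<Sum>b\<in>Aset n. G n a b) \<le> (\<Sum>a\<in>Aset n. \<Sum>b\<in>{1..n}. G n a b)"
      by (intro sum_mono sum_mono2 Aset_sub G_nonneg) auto
    also have "\<dots> \<le> (\<Sum>a\<in>{1..n}. \<Sum>b\<in>{1..n}. G n a b)"
      by (intro sum_mono2 Aset_sub sum_nonneg G_nonneg) auto
    finally show "(\<Sum>a\<in>Aset n. \<Sum>b\<in>Aset n. G n a b) \<le> (\<Sum>a\<in>{1..n}. \<Sum>b\<in>{1..n}. G n a b)" .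
    show "real (card (Aset n) * card (Aset n)) \<le> real n" using Aset_card[of n] by (metis of_nat_le_iff)
  qed simp
  also have "\<dots> \<le> real n * (H n ^ 2 * D1 n) + real n"
    by (intro add_mono mult_left_mono sum_G) auto
  finally have T: "real (card (Tset n)) \<le> real n * H n ^ 2 * D1 n + real n" by simp
  have "real (card (sols 2 n)) \<le> 4 * real (card (Tset n))" using sols2_le_T[of n] by linarith
  also have "\<dots> \<le> 4 * (real n * H n ^ 2 * D1 n + real n)" using T by simp
  finally show ?thesis .
qed

lemma sols_zero: "r > 0 \<Longrightarrow> sols r 0 = {}"
proof (rule ccontr)
  assume r: "r > 0" and "sols r 0 \<noteq> {}"
  then obtain ps where ps: "ps \<in> sols r 0" by auto
  then obtain p qs where pq: "ps = p # qs" using r unfolding sols_def by (cases ps) auto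
  have "0 < fst p * snd p" using ps pq unfolding sols_def by auto
  moreover have "fst p * snd p + (\<Sum>q\<leftarrow>qs. fst q * snd q) = 0" using ps pq unfolding sols_def by auto
  ultimately show False by simp
qed

definition D2 :: "nat \<Rightarrow> nat \<Rightarrow> real" where
  "D2 n m = (\<Sum>g\<in>{1..n}. if g dvd m then 1 / real g else 0)"

lemma W2': assumes "m \<le> n"
  shows "real (card (sols 2 m)) \<le> 4 * (real n * H n ^ 2 * D2 n m + real n)"
proof -
  have "D1 m \<le> D2 n m" unfolding D1_def D2_def using assms by (intro sum_mono2) auto
  moreover have "H m \<le> H n" using assms by (rule H_mono)
  moreover have "D1 m \<ge> 0" unfolding D1_def by (intro sum_nonneg) auto
  ultimately have "real m * H m ^ 2 * D1 m \<le> real n * H n ^ 2 * D2 n m"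
    using assms H_nonneg by (intro mult_mono power_mono) auto
  thus ?thesis using W2[of m] assms by simp
qed

lemma gcd_sum: assumes "g > 0"
  shows "(\<Sum>a\<in>{1..n}. real (gcd a g) / real a) \<le> H n * (\<Sum>e\<in>{1..n}. if e dvd g then 1 else 0)"
proof -
  define K where "K e a = (if e dvd g \<and> e dvd a then real e / real a else 0)" for e a
  have "(\<Sum>a\<in>{1..n}. real (gcd a g) / real a) \<le> (\<Sum>a\<in>{1..n}. \<Sum>e\<in>{1..n}. K e a)"
  proof (rule sum_mono)
    fix a assume a: "a \<in> {1..n}"
    have "gcd a g \<in> {1..n}" using a assms by (auto simp: Suc_le_eq intro: le_trans[OF gcd_le1_nat])
    hence "K (gcd a g) a \<le> (\<Sum>e\<in>{1..n}. K e a)" by (intro member_le_sum) (auto simp: K_def)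
    thus "real (gcd a g) / real a \<le> (\<Sum>e\<in>{1..n}. K e a)" by (simp add: K_def)
  qed
  also have "\<dots> = (\<Sum>e\<in>{1..n}. \<Sum>a\<in>{1..n}. K e a)" by (rule sum.swap)
  also have "\<dots> = (\<Sum>e\<in>{1..n}. (if e dvd g then real e else 0) * (\<Sum>a\<in>{1..n}. if e dvd a then 1 / real a else 0))"
    by (intro sum.cong refl) (auto simp: K_def sum_distrib_left intro!: sum.cong)
  also have "\<dots> \<le> (\<Sum>e\<in>{1..n}. (if e dvd g then real e else 0) * (H n / real e))"
    by (intro sum_mono mult_left_mono S1) auto
  also have "\<dots> = H n * (\<Sum>e\<in>{1..n}. if e dvd g then 1 else 0)"
    by (simp add: sum_distrib_left) (intro sum.cong refl, auto)
  finally show ?thesis .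
qed

lemma card_Pn_dvd: assumes "g > 0"
  shows "real (card {p\<in>Pn n. g dvd (n - fst p * snd p)}) \<le> real n / real g * H n * (\<Sum>e\<in>{1..n}. if e dvd g then 1 else 0) + real n"
proof -
  define X where "X a = {x. x \<le> n div a \<and> [a*x = n] (mod g)}" for a
  have sub: "{p\<in>Pn n. g dvd (n - fst p * snd p)} \<subseteq> (\<Union>a\<in>{1..n}. (\<lambda>x. (a,x)) ` X a)"
  proof
    fix p assume p: "p \<in> {p\<in>Pn n. g dvd (n - fst p * snd p)}"
    then obtain a x where ax: "p = (a,x)" "0<a" "0<x" "a*x \<le> n" "g dvd (n - a*x)" unfolding Pn_def by auto
    have "a \<le> a*x" using ax by simp
    hence "a \<le> n" using ax by linarith
    hence "a \<in> {1..n}" using ax by auto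
    moreover have "x \<le> n div a" using ax by (metis div_le_mono nonzero_mult_div_cancel_left not_gr0)
    moreover have "[a*x = n] (mod g)" using ax by (metis cong_altdef_nat cong_sym)
    ultimately show "p \<in> (\<Union>a\<in>{1..n}. (\<lambda>x. (a,x)) ` X a)" using ax unfolding X_def by auto
  qed
  have finX: "finite (X a)" for a unfolding X_def by simp
  have "card {p\<in>Pn n. g dvd (n - fst p * snd p)} \<le> card (\<Union>a\<in>{1..n}. (\<lambda>x. (a,x)) ` X a)"
    by (rule card_mono[OF _ sub]) (use finX in auto)
  also have "\<dots> \<le> (\<Sum>a\<in>{1..n}. card ((\<lambda>x. (a,x)) ` X a))" by (rule card_UN_le) simp
  also have "\<dots> \<le> (\<Sum>a\<in>{1..n}. card (X a))" by (intro sum_mono card_image_le finX)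
  finally have "real (card {p\<in>Pn n. g dvd (n - fst p * snd p)}) \<le> (\<Sum>a\<in>{1..n}. real (card (X a)))"
    by (metis of_nat_le_iff of_nat_sum)
  also have "\<dots> \<le> (\<Sum>a\<in>{1..n}. real n / real g * (real (gcd a g) / real a) + 1)"
  proof (rule sum_mono)
    fix a assume a: "a \<in> {1..n}"
    have "real (card (X a)) \<le> real (n div a) * gcd a g / g + 1"
      unfolding X_def by (rule card_cong_le[OF assms])
    also have "real (n div a) * gcd a g / g \<le> (real n / a) * gcd a g / g"
    proof -
      have "real (n div a) * real a \<le> real n" by (metis div_times_less_eq_dividend of_nat_le_iff of_nat_mult)
      hence "real (n div a) \<le> real n / a" using a by (simp add: field_simps)
      thus ?thesis by (intro divide_right_mono mult_right_mono) auto
    qed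
    finally show "real (card (X a)) \<le> real n / real g * (real (gcd a g) / real a) + 1" by (simp add: mult.commute)
  qed
  also have "\<dots> = real n / real g * (\<Sum>a\<in>{1..n}. real (gcd a g) / real a) + real n"
    by (simp add: sum.distrib sum_distrib_left)
  also have "\<dots> \<le> real n / real g * (H n * (\<Sum>e\<in>{1..n}. if e dvd g then 1 else 0)) + real n"
    by (intro add_mono mult_left_mono gcd_sum assms) auto
  finally show ?thesis by (simp add: mult.assoc)
qed

lemma H_ge1: "n \<ge> 1 \<Longrightarrow> H n \<ge> 1"
  using H_mono[of 1 n] by (simp add: H_def)

lemma sumE: "(\<Sum>g\<in>{1..n}. (\<Sum>e\<in>{1..n}. if e dvd g then 1 else 0) / real g ^ 2) \<le> 4"
proof -
  have "(\<Sum>g\<in>{1..n}. (\<Sum>e\<in>{1..n}. if e dvd g then 1 else 0) / real g ^ 2)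
      = (\<Sum>g\<in>{1..n}. \<Sum>e\<in>{1..n}. if e dvd g then 1 / real g ^ 2 else 0)"
    by (simp add: sum_divide_distrib) (intro sum.cong refl, auto)
  also have "\<dots> = (\<Sum>e\<in>{1..n}. \<Sum>g\<in>{1..n}. if e dvd g then 1 / real g ^ 2 else 0)"
    by (rule sum.swap)
  also have "\<dots> \<le> (\<Sum>e\<in>{1..n}. 2 * (1 / real e ^ 2))"
    using S2 by (intro sum_mono) auto
  also have "\<dots> = 2 * (\<Sum>e\<in>{1..n}. 1 / real e ^ 2)" by (simp add: sum_distrib_left)
  also have "\<dots> \<le> 2 * 2" using inv_sq_sum2 by (intro mult_left_mono) auto
  finally show ?thesis by simp
qed

lemma sum_D2: "(\<Sum>p\<in>Pn n. D2 n (n - fst p * snd p)) \<le> 5 * real n * H n"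
proof -
  define E where "E g = (\<Sum>e\<in>{1..n}. if e dvd g then 1 else 0::real)" for g
  have "(\<Sum>p\<in>Pn n. D2 n (n - fst p * snd p))
      = (\<Sum>g\<in>{1..n}. \<Sum>p\<in>Pn n. if g dvd (n - fst p * snd p) then 1 / real g else 0)"
    unfolding D2_def by (rule sum.swap)
  also have "\<dots> = (\<Sum>g\<in>{1..n}. real (card {p\<in>Pn n. g dvd (n - fst p * snd p)}) * (1 / real g))"
  proof (intro sum.cong refl)
    fix g
    show "(\<Sum>p\<in>Pn n. if g dvd (n - fst p * snd p) then 1 / real g else 0) =
      real (card {p\<in>Pn n. g dvd (n - fst p * snd p)}) * (1 / real g)"
      by (subst sum.inter_filter[symmetric]) (simp_all add: Pn_finite)
  qed
  also have "\<dots> \<le> (\<Sum>g\<in>{1..n}. (real n / real g * H n * E g + real n) * (1 / real g))"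
  proof (intro sum_mono mult_right_mono)
    fix g assume "g \<in> {1..n}"
    thus "real (card {p\<in>Pn n. g dvd (n - fst p * snd p)}) \<le> real n / real g * H n * E g + real n"
      unfolding E_def by (intro card_Pn_dvd) auto
  qed auto
  also have "\<dots> = real n * H n * (\<Sum>g\<in>{1..n}. E g / real g ^ 2) + real n * H n"
  proof -
    have "(\<Sum>g\<in>{1..n}. (real n / real g * H n * E g + real n) * (1 / real g))
       = (\<Sum>g\<in>{1..n}. real n * H n * (E g / real g ^ 2) + real n * (1 / real g))"
      by (intro sum.cong refl) (auto simp: field_simps power2_eq_square)
    also have "\<dots> = real n * H n * (\<Sum>g\<in>{1..n}. E g / real g ^ 2) + real n * H n"
      by (simp add: sum.distrib sum_distrib_left H_def)
    finally show ?thesis .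
  qed
  also have "\<dots> \<le> real n * H n * 4 + real n * H n"
    using sumE H_nonneg unfolding E_def by (intro add_mono mult_left_mono) auto
  finally show ?thesis by (simp add: ac_simps)
qed

lemma W3: "real (card (sols 3 n)) \<le> 24 * real n ^ 2 * H n ^ 3"
proof (cases "n = 0")
  case True then show ?thesis using sols_zero[of 3] by simp
next
  case False
  hence H1: "H n \<ge> 1" using H_ge1 by simp
  have "real (card (sols 3 n)) \<le> (\<Sum>p\<in>Pn n. real (card (sols 2 (n - fst p * snd p))))"
    using sols_Suc_le[of 2 n] by (simp add: numeral_3_eq_3 numeral_2_eq_2)
  also have "\<dots> \<le> (\<Sum>p\<in>Pn n. 4 * (real n * H n ^ 2 * D2 n (n - fst p * snd p) + real n))"
    by (intro sum_mono W2') auto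
  also have "\<dots> = 4 * real n * H n ^ 2 * (\<Sum>p\<in>Pn n. D2 n (n - fst p * snd p)) + 4 * real n * real (card (Pn n))"
    by (simp add: sum.distrib sum_distrib_left algebra_simps)
  also have "\<dots> \<le> 4 * real n * H n ^ 2 * (5 * real n * H n) + 4 * real n * (real n * H n)"
    using sum_D2 card_Pn H_nonneg by (intro add_mono mult_left_mono) auto
  also have "\<dots> = 20 * real n ^ 2 * H n ^ 3 + 4 * real n ^ 2 * H n"
    by (simp add: power2_eq_square power3_eq_cube algebra_simps)
  also have "4 * real n ^ 2 * H n \<le> 4 * real n ^ 2 * H n ^ 3"
  proof -
    have "1 \<le> H n ^ 2" using H1 by (simp add: one_le_power)
    hence "H n * 1 \<le> H n * H n ^ 2" using H1 by (intro mult_left_mono) auto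
    hence "H n \<le> H n ^ 3" by (simp add: power2_eq_square power3_eq_cube)
    thus ?thesis by (intro mult_left_mono) auto
  qed
  finally show ?thesis by (simp add: ac_simps)
qed

lemma Wr: "r \<ge> 3 \<Longrightarrow> real (card (sols r n)) \<le> 24 * real n ^ (r - 1) * H n ^ r"
proof (induction r arbitrary: n rule: nat_induct_at_least)
  case base then show ?case using W3 by simp
next
  case (Suc r)
  have "real (card (sols (Suc r) n)) \<le> (\<Sum>p\<in>Pn n. real (card (sols r (n - fst p * snd p))))"
    by (rule sols_Suc_le)
  also have "\<dots> \<le> (\<Sum>p\<in>Pn n. 24 * real n ^ (r - 1) * H n ^ r)"
  proof (rule sum_mono)
    fix p assume "p \<in> Pn n"
    define m where "m = n - fst p * snd p"
    have mn: "m \<le> n" unfolding m_def by simp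
    have "real (card (sols r m)) \<le> 24 * real m ^ (r - 1) * H m ^ r" by (rule Suc.IH)
    also have "\<dots> \<le> 24 * real n ^ (r - 1) * H n ^ r"
      using mn H_mono[OF mn] H_nonneg by (intro mult_mono power_mono) auto
    finally show "real (card (sols r (n - fst p * snd p))) \<le> 24 * real n ^ (r - 1) * H n ^ r"
      unfolding m_def .
  qed
  also have "\<dots> = real (card (Pn n)) * (24 * real n ^ (r - 1) * H n ^ r)" by simp
  also have "\<dots> \<le> (real n * H n) * (24 * real n ^ (r - 1) * H n ^ r)"
    using card_Pn H_nonneg by (intro mult_right_mono) auto
  also have "\<dots> = 24 * real n ^ (Suc r - 1) * H n ^ Suc r"
    using Suc.hyps by (cases r) (auto simp: algebra_simps)
  finally show ?case .
qed

definition Phi :: "nat list \<Rightarrow> (nat \<times> nat) list" where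
  "Phi \<alpha> = map (\<lambda>s. (s, count_list \<alpha> s)) (sorted_list_of_set (set \<alpha>))"

lemma Phi_inj: "inj_on Phi {\<alpha>. is_partition \<alpha>}"
proof (rule inj_onI)
  fix \<alpha> \<beta> assume a: "\<alpha> \<in> {\<alpha>. is_partition \<alpha>}" and b: "\<beta> \<in> {\<alpha>. is_partition \<alpha>}" and eq: "Phi \<alpha> = Phi \<beta>"
  have "map fst (Phi \<alpha>) = map fst (Phi \<beta>)" using eq by simp
  hence sl: "sorted_list_of_set (set \<alpha>) = sorted_list_of_set (set \<beta>)" unfolding Phi_def by (simp add: comp_def)
  hence st: "set \<alpha> = set \<beta>" by (metis List.finite_set set_sorted_list_of_set)
  have "\<forall>s\<in>set (sorted_list_of_set (set \<alpha>)). count_list \<alpha> s = count_list \<beta> s"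
    using eq unfolding Phi_def sl by (simp)
  hence c1: "\<forall>s\<in>set \<alpha>. count_list \<alpha> s = count_list \<beta> s" by simp
  have "count_list \<alpha> s = count_list \<beta> s" for s
  proof (cases "s \<in> set \<alpha>")
    case True then show ?thesis using c1 by simp
  next
    case False
    hence "s \<notin> set \<beta>" using st by simp
    thus ?thesis using False by (simp add: count_list_0_iff)
  qed
  hence ms: "mset (rev \<alpha>) = mset (rev \<beta>)" by (simp add: multiset_eq_iff count_mset)
  have sa: "sorted (rev \<alpha>)" "sorted (rev \<beta>)" using a b unfolding is_partition_def by (simp_all add: sorted_wrt_rev)
  have "sort (rev \<beta>) = rev \<alpha>" by (rule properties_for_sort[OF ms sa(1)])
  moreover have "sort (rev \<beta>) = rev \<beta>" by (rule properties_for_sort[OF refl sa(2)])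
  ultimately show "\<alpha> = \<beta>" by simp
qed

lemma Phi_sols: assumes "is_partition \<alpha>"
  shows "Phi \<alpha> \<in> sols (card (set \<alpha>)) (sum_list \<alpha>)"
proof -
  have len: "length (Phi \<alpha>) = card (set \<alpha>)" unfolding Phi_def by simp
  have pos: "\<forall>p\<in>set (Phi \<alpha>). 0 < fst p \<and> 0 < snd p"
  proof
    fix p assume "p \<in> set (Phi \<alpha>)"
    then obtain s where s: "s \<in> set \<alpha>" "p = (s, count_list \<alpha> s)" unfolding Phi_def by auto
    have "count_list \<alpha> s \<noteq> 0" using s(1) count_list_0_iff by metis
    moreover have "0 < s" using s(1) assms unfolding is_partition_def by auto
    ultimately show "0 < fst p \<and> 0 < snd p" using s(2) by simp
  qed
  have "(\<Sum>p\<leftarrow>Phi \<alpha>. fst p * snd p) = (\<Sum>s\<leftarrow>sorted_list_of_set (set \<alpha>). s * count_list \<alpha> s)"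
    unfolding Phi_def by (simp add: comp_def)
  also have "\<dots> = (\<Sum>s\<in>set \<alpha>. s * count_list \<alpha> s)"
  proof -
    have "(\<Sum>s\<in>set (sorted_list_of_set (set \<alpha>)). s * count_list \<alpha> s) =
      (\<Sum>s\<leftarrow>sorted_list_of_set (set \<alpha>). s * count_list \<alpha> s)"
      by (rule sum.distinct_set_conv_list) simp
    thus ?thesis by simp
  qed
  also have "\<dots> = sum_list \<alpha>"
    using sum_list_map_eq_sum_count[of "\<lambda>x. x" \<alpha>] by (simp add: mult.commute)
  finally show ?thesis using len pos unfolding sols_def by simp
qed

lemma sorted_desc_unique:
  fixes xs ys :: "nat list"
  assumes "sorted_wrt (\<ge>) xs" "distinct xs" "sorted_wrt (\<ge>) ys" "distinct ys" "set xs = set ys"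
  shows "xs = ys"
proof -
  have "rev xs = rev ys"
    using assms by (intro sorted_distinct_set_unique) (simp_all add: sorted_wrt_rev)
  thus ?thesis by simp
qed

lemma contains_big:
  assumes pa: "is_partition \<alpha>" and sm: "strict_partition \<mu>" and ne: "\<mu> \<noteq> []"
    and cd: "card (set \<alpha>) \<ge> hd \<mu>"
  shows "contains \<alpha> \<mu>"
proof -
  define m where "m = hd \<mu>"
  have mu_sorted: "sorted_wrt (\<ge>) \<mu>" and mu_dist: "distinct \<mu>" and mu_pos: "\<forall>x\<in>set \<mu>. 0 < x"
    using sm unfolding strict_partition_def is_partition_def by auto
  have mu_sub: "set \<mu> \<subseteq> {1..m}"
  proof
    fix x assume x: "x \<in> set \<mu>"
    obtain h t where ht: "\<mu> = h # t" using ne by (cases \<mu>) auto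
    have "x \<le> h" using x mu_sorted ht by auto
    thus "x \<in> {1..m}" using x mu_pos ht unfolding m_def by (auto simp: Suc_le_eq)
  qed
  obtain U where U: "U \<subseteq> set \<alpha>" "card U = m" "finite U"
    using obtain_subset_with_card_n[of m "set \<alpha>"] cd m_def by auto
  have Upos: "\<forall>u\<in>U. 0 < u" using U pa unfolding is_partition_def by auto
  define C where "C = (\<lambda>u. u - 1) ` U"
  define f where "f s = card {j\<in>C. j < s}" for s
  have finC: "finite C" unfolding C_def using U by simp
  have fU: "f s = card {u\<in>U. u \<le> s}" if "s \<in> U" for s
  proof -
    have inj: "inj_on (\<lambda>u. u - 1) U"
    proof (rule inj_onI)
      fix x y assume "x \<in> U" "y \<in> U" "x - 1 = y - 1"
      moreover have "0 < x" "0 < y" using \<open>x \<in> U\<close> \<open>y \<in> U\<close> Upos by blast+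
      ultimately show "x = y" by linarith
    qed
    have "{j\<in>C. j < s} = (\<lambda>u. u - 1) ` {u\<in>U. u \<le> s}"
    proof (intro set_eqI iffI)
      fix j assume "j \<in> {j\<in>C. j < s}"
      then obtain u where u: "u \<in> U" "j = u - 1" "u - 1 < s" unfolding C_def by auto
      have "0 < u" using u(1) Upos by blast
      hence "u \<le> s" using u(3) by linarith
      thus "j \<in> (\<lambda>u. u - 1) ` {u\<in>U. u \<le> s}" using u by auto
    next
      fix j assume "j \<in> (\<lambda>u. u - 1) ` {u\<in>U. u \<le> s}"
      then obtain u where u: "u \<in> U" "j = u - 1" "u \<le> s" by auto
      have "0 < u" using u(1) Upos by blast
      hence "u - 1 < s" using u(3) by linarith
      thus "j \<in> {j\<in>C. j < s}" using u unfolding C_def by auto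
    qed
    hence "f s = card ((\<lambda>u. u - 1) ` {u\<in>U. u \<le> s})" unfolding f_def by simp
    also have "\<dots> = card {u\<in>U. u \<le> s}"
    proof (rule card_image)
      show "inj_on (\<lambda>u. u - 1) {u\<in>U. u \<le> s}" by (rule inj_on_subset[OF inj]) blast
    qed
    finally show ?thesis .
  qed
  have f_img: "f ` U \<subseteq> {1..m}"
  proof
    fix y assume "y \<in> f ` U"
    then obtain s where s: "s \<in> U" "y = f s" by auto
    have "{u\<in>U. u \<le> s} \<noteq> {}" using s by auto
    hence "card {u\<in>U. u \<le> s} \<ge> 1" using U(3) by (simp add: Suc_le_eq card_gt_0_iff)
    moreover have "card {u\<in>U. u \<le> s} \<le> m" 
      using card_mono[OF U(3), of "{u\<in>U. u \<le> s}"] U(2) by blast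
    ultimately show "y \<in> {1..m}" using s fU by auto
  qed
  have f_inj: "inj_on f U"
  proof -
    have lt: "f s < f s'" if "s \<in> U" "s' \<in> U" "s < s'" for s s'
    proof -
      have "s' \<in> {u\<in>U. u \<le> s'}" "s' \<notin> {u\<in>U. u \<le> s}" using that by auto
      moreover have "{u\<in>U. u \<le> s} \<subseteq> {u\<in>U. u \<le> s'}" using that by auto
      ultimately have "{u\<in>U. u \<le> s} \<subset> {u\<in>U. u \<le> s'}" by blast
      hence "card {u\<in>U. u \<le> s} < card {u\<in>U. u \<le> s'}" using U(3) by (intro psubset_card_mono) auto
      thus ?thesis using that fU by simp
    qed
    show ?thesis
    proof (rule inj_onI)
      fix s s' assume ss: "s \<in> U" "s' \<in> U" "f s = f s'"
      show "s = s'"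
      proof (rule linorder_cases[of s s'])
        assume "s < s'" thus ?thesis using lt[OF ss(1,2)] ss(3) by simp
      next
        assume "s' < s" thus ?thesis using lt[OF ss(2,1)] ss(3) by simp
      qed
    qed
  qed
  have f_onto: "f ` U = {1..m}"
    using f_img f_inj U by (intro card_subset_eq) (auto simp: card_image)
  have ex: "\<exists>i. i < length \<alpha> \<and> f (\<alpha> ! i) = p" if pm: "p \<in> set \<mu>" for p
  proof -
    have "p \<in> f ` U" using pm mu_sub f_onto by blast
    then obtain u where u: "u \<in> U" "f u = p" by blast
    have "u \<in> set \<alpha>" using U(1) u(1) by blast
    then obtain i where "i < length \<alpha>" "\<alpha> ! i = u" by (auto simp: in_set_conv_nth)
    thus ?thesis using u by blast
  qed
  define ix where "ix p = (SOME i. i < length \<alpha> \<and> f (\<alpha> ! i) = p)" for p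
  have ix: "ix p < length \<alpha> \<and> f (\<alpha> ! ix p) = p" if "p \<in> set \<mu>" for p
    unfolding ix_def by (rule someI_ex[OF ex[OF that]])
  define R where "R = ix ` set \<mu>"
  define v where "v i = f (\<alpha> ! i)" for i
  define L where "L = map v (sorted_list_of_set R)"
  have vix: "v (ix p) = p" if "p \<in> set \<mu>" for p using ix[OF that] unfolding v_def by blast
  have finR: "finite R" unfolding R_def by simp
  have Rsub: "R \<subseteq> {..<length \<alpha>}" unfolding R_def using ix by blast
  have vR: "v ` R = set \<mu>"
  proof -
    have "v ` R = (\<lambda>p. v (ix p)) ` set \<mu>" unfolding R_def by (simp add: image_image)
    also have "\<dots> = (\<lambda>p. p) ` set \<mu>" by (rule image_cong[OF refl vix])
    finally show ?thesis by simp
  qed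
  have vinj: "inj_on v R"
  proof (rule inj_onI)
    fix i j assume "i \<in> R" "j \<in> R" "v i = v j"
    then obtain p q where "p \<in> set \<mu>" "q \<in> set \<mu>" "i = ix p" "j = ix q" unfolding R_def by blast
    thus "i = j" using vix \<open>v i = v j\<close> by metis
  qed
  have setL: "set L = set \<mu>" unfolding L_def using finR vR by simp
  have distL: "distinct L" unfolding L_def using finR vinj by (simp add: distinct_map)
  have sortL: "sorted_wrt (\<ge>) L"
  proof -
    have "sorted_wrt (<) (sorted_list_of_set R)" using finR by simp
    hence "sorted_wrt (\<lambda>i j. v i \<ge> v j) (sorted_list_of_set R)"
    proof (rule sorted_wrt_mono_rel[rotated])
      fix i j assume ij: "i \<in> set (sorted_list_of_set R)" "j \<in> set (sorted_list_of_set R)" "i < j"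
      hence "j < length \<alpha>" using finR Rsub by auto
      hence "\<alpha> ! i \<ge> \<alpha> ! j" using ij(3) pa unfolding is_partition_def by (auto dest: sorted_wrt_nth_less)
      thus "v i \<ge> v j" unfolding v_def f_def using finC by (intro card_mono) auto
    qed
    thus ?thesis unfolding L_def by (simp add: sorted_wrt_map)
  qed
  have LMU: "L = \<mu>" by (rule sorted_desc_unique[OF sortL distL mu_sorted mu_dist setL])
  have "filter (\<lambda>x. 0 < x) L = L" using setL mu_pos by (simp add: filter_id_conv)
  hence "filter (\<lambda>x. 0 < x) (map (\<lambda>i. card {j\<in>C. j < \<alpha> ! i}) (sorted_list_of_set R)) = \<mu>"
    using LMU unfolding L_def v_def f_def by simp
  thus ?thesis unfolding contains_def using Rsub finC by blast
qed

lemma div_fin: "n > 0 \<Longrightarrow> finite {d::nat. d dvd n}" by simp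

lemma sig_ge: assumes "n > 0" shows "real n ^ i \<le> sigma i n"
  unfolding sigma_def using assms by (intro member_le_sum) auto

lemma sig_mono: assumes "n > 0" "i \<le> i'" shows "sigma i n \<le> sigma i' n"
  unfolding sigma_def
proof (rule sum_mono)
  fix d assume "d \<in> {d. d dvd n}"
  hence "d > 0" using assms by (auto intro: dvd_pos_nat)
  thus "real d ^ i \<le> real d ^ i'" using assms by (intro power_increasing) auto
qed

lemma sig0: "n > 0 \<Longrightarrow> sigma 0 n = real (card {d. d dvd n})"
  unfolding sigma_def by simp

lemma sig1: assumes "n > 0" shows "real n * D1 n \<le> sigma 1 n"
proof -
  have "{g\<in>{1..n}. g dvd n} = {d. d dvd n}" using assms by (auto simp: Suc_le_eq dvd_imp_le intro: dvd_pos_nat)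
  hence "D1 n = (\<Sum>g\<in>{d. d dvd n}. 1 / real g)" unfolding D1_def
    by (simp add: sum.inter_filter[symmetric])
  hence "real n * D1 n = (\<Sum>g\<in>{d. d dvd n}. real n / real g)" by (simp add: sum_distrib_left)
  also have "\<dots> = (\<Sum>g\<in>{d. d dvd n}. real (n div g))"
    by (intro sum.cong refl) (auto simp: real_of_nat_div)
  also have "\<dots> = (\<Sum>d\<in>{d. d dvd n}. real d)"
    by (rule sum.reindex_bij_witness[of _ "\<lambda>d. n div d" "\<lambda>d. n div d"])
       (use assms in \<open>auto simp: div_div_eq_right dvd_div_eq_mult intro: dvd_div_mult_self\<close>)
  also have "\<dots> = sigma 1 n" unfolding sigma_def by simp
  finally show ?thesis by simp
qed

lemma sols0: "n > 0 \<Longrightarrow> sols 0 n = {}" unfolding sols_def by auto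

lemma AvD_count:
  assumes sm: "strict_partition \<mu>" and ne: "\<mu> \<noteq> []" and n: "n > 0"
  shows "card (Av n \<mu> - D n \<mu>) \<le> (\<Sum>r\<in>{..hd \<mu> - 2}. card (sols r n))"
proof -
  have sub: "Phi ` (Av n \<mu> - D n \<mu>) \<subseteq> (\<Union>r\<in>{..hd \<mu> - 2}. sols r n)"
  proof
    fix y assume "y \<in> Phi ` (Av n \<mu> - D n \<mu>)"
    then obtain \<alpha> where a: "\<alpha> \<in> Av n \<mu>" "\<alpha> \<notin> D n \<mu>" "y = Phi \<alpha>" by auto
    have pa: "is_partition \<alpha>" "sum_list \<alpha> = n" "\<not> contains \<alpha> \<mu>" using a unfolding Av_def by auto
    have "card (set \<alpha>) < hd \<mu>" using contains_big[OF pa(1) sm ne] pa(3) by linarith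
    moreover have "card (set \<alpha>) \<noteq> hd \<mu> - 1" using a n unfolding D_def by auto
    ultimately have "card (set \<alpha>) \<in> {..hd \<mu> - 2}" by auto
    moreover have "y \<in> sols (card (set \<alpha>)) n" using Phi_sols[OF pa(1)] pa(2) a(3) by simp
    ultimately show "y \<in> (\<Union>r\<in>{..hd \<mu> - 2}. sols r n)" by blast
  qed
  have inj: "inj_on Phi (Av n \<mu> - D n \<mu>)"
    by (rule inj_on_subset[OF Phi_inj]) (auto simp: Av_def)
  have "card (Av n \<mu> - D n \<mu>) \<le> card (\<Union>r\<in>{..hd \<mu> - 2}. sols r n)"
    by (rule card_inj_on_le[OF inj sub]) (auto intro: sols_finite)
  also have "\<dots> \<le> (\<Sum>r\<in>{..hd \<mu> - 2}. card (sols r n))" by (rule card_UN_le) simp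
  finally show ?thesis .
qed

lemma big_c: assumes "0 \<le> (x::real)" shows "x \<le> 24 * 2 ^ j * x"
proof -
  have "(1::real) \<le> 24 * 2 ^ j" using one_le_power[of "2::real" j] by linarith
  from mult_right_mono[OF this assms] show ?thesis by simp
qed

lemma each_bound:
  assumes n: "n \<ge> 3" and j: "j \<ge> 2" and r: "r \<le> j"
  shows "real (card (sols r n)) \<le> 24 * 2 ^ j * (sigma (j - 1) n * ln (real n) ^ j)"
proof -
  have n0: "n > 0" using n by simp
  have ln1: "ln (real n) \<ge> 1"
  proof -
    have "exp 1 \<le> (3::real)" using exp_le by simp
    also have "\<dots> \<le> real n" using n by simp
    finally have "exp 1 \<le> real n" .
    hence "ln (exp 1) \<le> ln (real n)" using n0 by (subst ln_le_cancel_iff) auto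
    thus ?thesis by simp
  qed
  define S where "S = sigma (j - 1) n"
  define l where "l = ln (real n)"
  have S1: "S \<ge> 1"
  proof -
    have "(1::real) \<le> real n ^ (j - 1)" using n by (intro one_le_power) simp
    thus ?thesis unfolding S_def using sig_ge[OF n0, of "j-1"] by linarith
  qed
  have lj: "l ^ j \<ge> 1" unfolding l_def using ln1 by (simp add: one_le_power)
  have H2: "H n \<le> 2 * l" using H_le_ln[of n] ln1 unfolding l_def by simp
  have Hnn: "0 \<le> H n" by (rule H_nonneg)
  have pos: "0 \<le> S * l ^ j" using S1 lj by simp
  have base: "S \<le> S * l ^ j" using S1 lj by (simp add: mult_le_cancel_left1)
  have p2: "(2::real) ^ j \<ge> 1" by simp
  consider "r = 0" | "r = 1" | "r = 2" | "r \<ge> 3" by linarith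
  thus ?thesis
  proof cases
    case 1 then show ?thesis using sols0[OF n0] pos unfolding S_def l_def by simp
  next
    case 2
    have "real (card (sols 1 n)) \<le> sigma 0 n" using sols_one[OF n0] sig0[OF n0] by simp
    also have "\<dots> \<le> S" unfolding S_def by (rule sig_mono[OF n0]) simp
    also have "\<dots> \<le> S * l ^ j" by (rule base)
    also have "\<dots> \<le> (24 * 2 ^ j) * (S * l ^ j)" by (rule big_c[OF pos])
    finally show ?thesis using 2 unfolding S_def l_def by simp
  next
    case 3
    have s1: "sigma 1 n \<le> S" unfolding S_def using j by (intro sig_mono[OF n0]) auto
    have nS: "real n \<le> S" using sig_ge[OF n0, of 1] s1 by simp
    have "real (card (sols 2 n)) \<le> 4 * (real n * H n ^ 2 * D1 n + real n)" by (rule W2)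
    also have "real n * H n ^ 2 * D1 n = H n ^ 2 * (real n * D1 n)" by simp
    also have "\<dots> \<le> (2 * l) ^ 2 * S"
    proof -
      have "0 \<le> D1 n" unfolding D1_def by (intro sum_nonneg) auto
      hence "0 \<le> real n * D1 n" by simp
      thus ?thesis using sig1[OF n0] s1 H2 Hnn by (intro mult_mono power_mono) auto
    qed
    also have "4 * ((2 * l) ^ 2 * S + real n) \<le> 4 * (4 * l ^ 2 * S + S * l^2)"
    proof -
      have "l ^ 2 \<ge> 1" using ln1 unfolding l_def by (simp add: one_le_power)
      hence "S * 1 \<le> S * l ^ 2" using S1 by (intro mult_left_mono) auto
      hence "real n \<le> S * l ^ 2" using nS by simp
      thus ?thesis by (simp add: power_mult_distrib)
    qed
    also have "\<dots> = 20 * (S * l ^ 2)" by simp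
    also have "\<dots> \<le> 20 * (S * l ^ j)"
      using S1 ln1 j unfolding l_def by (intro mult_left_mono power_increasing) auto
    also have "\<dots> \<le> 24 * (S * l ^ j)" by (intro mult_right_mono) (use pos in auto)
    also have "\<dots> \<le> 24 * 2 ^ j * (S * l ^ j)" using pos p2 by (intro mult_right_mono) auto
    finally show ?thesis using 3 unfolding S_def l_def by simp
  next
    case 4
    have "real (card (sols r n)) \<le> 24 * real n ^ (r - 1) * H n ^ r" by (rule Wr[OF 4])
    also have "\<dots> \<le> 24 * S * (2 * l) ^ j"
    proof (rule mult_mono)
      have "real n ^ (r - 1) \<le> real n ^ (j - 1)" using r n by (intro power_increasing) auto
      also have "\<dots> \<le> S" unfolding S_def by (rule sig_ge[OF n0])
      finally show "24 * real n ^ (r - 1) \<le> 24 * S" by simp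
      have "H n ^ r \<le> (2 * l) ^ r" using H2 Hnn by (intro power_mono) auto
      also have "\<dots> \<le> (2 * l) ^ j" using ln1 r unfolding l_def by (intro power_increasing) auto
      finally show "H n ^ r \<le> (2 * l) ^ j" .
    qed (use S1 Hnn in auto)
    also have "\<dots> = 24 * 2 ^ j * (S * l ^ j)" by (simp add: power_mult_distrib)
    finally show ?thesis unfolding S_def l_def .
  qed
qed

theorem mainTheorem15:
  fixes \<mu> :: "nat list" and k :: nat
  assumes "strict_partition \<mu>" and "\<mu> \<noteq> []" and "hd \<mu> > 1" and "k = hd \<mu> - 1"
  shows "(k = 2 \<longrightarrow>
           (\<lambda>n. real (card (Av n \<mu> - D n \<mu>))) \<in> O(\<lambda>n. sigma 0 n))
       \<and> (k \<ge> 3 \<longrightarrow>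
           (\<lambda>n. real (card (Av n \<mu> - D n \<mu>))) \<in> O(\<lambda>n. sigma (k - 2) n * ln (real n) ^ (k - 1)))"
proof (intro conjI impI)
  assume k2: "k = 2"
  have hd3: "hd \<mu> - 2 = 1" using k2 assms(4) by simp
  show "(\<lambda>n. real (card (Av n \<mu> - D n \<mu>))) \<in> O(\<lambda>n. sigma 0 n)"
  proof (rule bigoI[where c = 1])
    show "\<forall>\<^sub>F n in at_top. norm (real (card (Av n \<mu> - D n \<mu>))) \<le> 1 * norm (sigma 0 n)"
      unfolding eventually_at_top_linorder
    proof (intro exI allI impI)
      fix n :: nat assume "n \<ge> 1"
      hence n0: "n > 0" by simp
      have "card (Av n \<mu> - D n \<mu>) \<le> (\<Sum>r\<in>{..hd \<mu> - 2}. card (sols r n))"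
        by (rule AvD_count[OF assms(1,2) n0])
      also have "\<dots> = card (sols 0 n) + card (sols 1 n)" unfolding hd3 by simp
      also have "\<dots> \<le> card {d. d dvd n}" using sols0[OF n0] sols_one[OF n0] by simp
      finally have "real (card (Av n \<mu> - D n \<mu>)) \<le> sigma 0 n" using sig0[OF n0] by simp
      moreover have "0 \<le> sigma 0 n" using sig0[OF n0] by simp
      ultimately show "norm (real (card (Av n \<mu> - D n \<mu>))) \<le> 1 * norm (sigma 0 n)" by simp
    qed
  qed
next
  assume k3: "k \<ge> 3"
  define j where "j = hd \<mu> - 2"
  have jk: "k - 2 = j - 1" "k - 1 = j" "j \<ge> 2" using k3 assms(4) unfolding j_def by auto
  define c :: real where "c = real (Suc j) * (24 * 2 ^ j)"
  show "(\<lambda>n. real (card (Av n \<mu> - D n \<mu>))) \<in> O(\<lambda>n. sigma (k - 2) n * ln (real n) ^ (k - 1))"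
    unfolding jk(1,2)
  proof (rule bigoI[where c = c])
    show "\<forall>\<^sub>F n in at_top. norm (real (card (Av n \<mu> - D n \<mu>))) \<le> c * norm (sigma (j - 1) n * ln (real n) ^ j)"
      unfolding eventually_at_top_linorder
    proof (intro exI allI impI)
      fix n :: nat assume n3: "n \<ge> 3"
      hence n0: "n > 0" by simp
      have "card (Av n \<mu> - D n \<mu>) \<le> (\<Sum>r\<in>{..j}. card (sols r n))"
        unfolding j_def by (rule AvD_count[OF assms(1,2) n0])
      hence "real (card (Av n \<mu> - D n \<mu>)) \<le> (\<Sum>r\<in>{..j}. real (card (sols r n)))"
        by (metis of_nat_le_iff of_nat_sum)
      also have "\<dots> \<le> (\<Sum>r\<in>{..j}. 24 * 2 ^ j * (sigma (j - 1) n * ln (real n) ^ j))"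
        by (intro sum_mono each_bound[OF n3 jk(3)]) auto
      also have "\<dots> = c * (sigma (j - 1) n * ln (real n) ^ j)" unfolding c_def by simp
      finally have le: "real (card (Av n \<mu> - D n \<mu>)) \<le> c * (sigma (j - 1) n * ln (real n) ^ j)" .
      have "0 \<le> sigma (j - 1) n" unfolding sigma_def by (intro sum_nonneg) auto
      moreover have "0 \<le> ln (real n)" using n3 by simp
      ultimately have "0 \<le> sigma (j - 1) n * ln (real n) ^ j" by simp
      thus "norm (real (card (Av n \<mu> - D n \<mu>))) \<le> c * norm (sigma (j - 1) n * ln (real n) ^ j)"
        using le by simp
    qed
  qed
qed

end
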